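(* Let $u\in[0,1]$, $s\geq 1$, and for $x\in(0,1)$ define $$g_{u,s}(x)=\frac{s}{2}\log(1-ux^2)+\log\left(\frac{\operatorname{arth}(x)}{x}\right),$$ where $\operatorname{arth}(x)=\frac12\log\frac{1+x}{1-x}$ is the inverse hyperbolic tangent. Then $g_{u,s}(x)>0$ for all $x\in(0,1)$ if and only if $3su\leq 2$. *)

theory Defs
  imports Complex_Main
begin

definition g :: "real \<Rightarrow> real \<Rightarrow> real \<Rightarrow> real" where
  "g u s x = s / 2 * ln (1 - u * x\<^sup>2) + ln (artanh x / x)"

end

theory Submission
  imports Defs
begin

lemma poly_id: "(1 - 2*a/3)^3 - (1-a)^2 = a*a*(9 - 8*a)/(27::real)"
  by (simp add: power2_eq_square power3_eq_cube field_simps) 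

lemma key_deriv:
  assumes "0 < t" "t < 1"
  shows "\<exists>y. ((\<lambda>t. artanh t - t / sqrt (1 - 2*t^2/3)) has_real_derivative y) (at t) \<and> y > 0"
proof -
  have t2: "t^2 < 1" using assms by (simp add: abs_less_iff power2_less_1_iff)  
  have q: "1 - 2*t^2/3 > 0" using t2 by simp
  have a: "\<bar>t\<bar> < 1" using assms by simp
  define r where "r = sqrt (1 - 2*t^2/3)"
  have r: "r > 0" "r^2 = 1 - 2*t^2/3" using q by (auto simp: r_def)
  have hq: "((\<lambda>t. 1 - 2*t^2/3) has_real_derivative (-(4*t/3))) (at t)"
    by (rule derivative_eq_intros refl | simp)+
  have hs: "((\<lambda>t. sqrt (1 - 2*t^2/3)) has_real_derivative (inverse r / 2 * (-(4*t/3)))) (at t)"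
    unfolding r_def by (rule DERIV_chain2[OF DERIV_real_sqrt[OF q] hq])
  have hd: "((\<lambda>t. t / sqrt (1 - 2*t^2/3)) has_real_derivative ((1 * r - t * (inverse r / 2 * (-(4*t/3)))) / (r * r))) (at t)"
    using DERIV_divide[OF DERIV_ident hs] r unfolding r_def by simp
  have hf: "((\<lambda>t. artanh t - t / sqrt (1 - 2*t^2/3)) has_real_derivative
       (1/(1-t^2) - (1 * r - t * (inverse r / 2 * (-(4*t/3)))) / (r * r))) (at t)"
    by (rule DERIV_diff[OF artanh_real_has_field_derivative[OF a] hd])
  have e: "(1 * r - t * (inverse r / 2 * (-(4*t/3)))) / (r * r) = 1 / r^3"
    using r(1) r(2)
    by (simp add: field_simps power2_eq_square power3_eq_cube)
  have "(r^3)^2 > (1 - t^2)^2"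
  proof -
    have "(r^3)^2 = (r^2)^3" by (simp add: power_mult[symmetric] mult.commute)
    also have "\<dots> = (1 - 2*t^2/3)^3" using r by simp
    finally have h: "(r^3)^2 = (1 - 2*t^2/3)^3" .
    have "(1 - 2*t^2/3)^3 - (1-t^2)^2 = t^2*t^2*(9 - 8*t^2)/27"
      using poly_id[of "t^2"] by simp
    moreover have "t^2*t^2*(9 - 8*t^2)/27 > 0" using t2 assms by simp
    ultimately show ?thesis using h by linarith
  qed
  hence "r^3 > 1 - t^2"
    by (rule power2_less_imp_less) (use r in simp)
  hence "1/(1-t^2) > 1/r^3" using t2 by (simp add: frac_less2)
  thus ?thesis using e hf by (intro exI[of _ "1/(1-t^2) - 1/r^3"]) simp
qed
lemma key_ineq:
  assumes "0 < x" "x < 1"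
  shows "artanh x > x / sqrt (1 - 2*x^2/3)"
proof -
  have "(\<lambda>t. artanh t - t / sqrt (1 - 2*t^2/3)) 0 < (\<lambda>t. artanh t - t / sqrt (1 - 2*t^2/3)) x"
  proof (rule DERIV_pos_imp_increasing_open[OF assms(1)])
    fix t assume "0 < t" "t < x"
    thus "\<exists>y. ((\<lambda>t. artanh t - t / sqrt (1 - 2*t^2/3)) has_real_derivative y) (at t) \<and> y > 0"
      using key_deriv assms by simp
  next
    have "\<forall>t\<in>{0..x}. \<bar>t\<bar> < 1 \<and> 1 - 2*t^2/3 > 0"
    proof
      fix t assume "t \<in> {0..x}"
      hence "\<bar>t\<bar> < 1" using assms by auto
      hence "t^2 < 1" by (simp add: power2_less_1_iff abs_less_iff)
      thus "\<bar>t\<bar> < 1 \<and> 1 - 2*t^2/3 > 0" using \<open>\<bar>t\<bar> < 1\<close> by simp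
    qed
    thus "continuous_on {0..x} (\<lambda>t. artanh t - t / sqrt (1 - 2*t^2/3))"
      by (intro continuous_intros) auto
  qed
  thus ?thesis by simp
qed

lemma bern_ln:
  fixes s t :: real
  assumes "0 \<le> t" "t < 1" "1 \<le> s" "s * t < 1"
  shows "ln (1 - s*t) \<le> s * ln (1 - t)"
proof -
  have "(\<lambda>v. v * ln (1 - t) - ln (1 - v*t)) 1 \<le> (\<lambda>v. v * ln (1 - t) - ln (1 - v*t)) s"
  proof (rule DERIV_nonneg_imp_nondecreasing[OF assms(3)])
    fix v assume v: "1 \<le> v" "v \<le> s"
    have vt: "v*t \<le> s*t" using v assms by (simp add: mult_right_mono)
    hence pos: "1 - v*t > 0" using assms by simp
    have d1: "((\<lambda>v. v * ln (1 - t)) has_real_derivative (1 * ln (1-t))) (at v)"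
      by (rule DERIV_cmult_right[OF DERIV_ident])
    have d2: "((\<lambda>v. 1 - v*t) has_real_derivative (0 - 1 * t)) (at v)"
      by (rule DERIV_diff[OF DERIV_const DERIV_cmult_right[OF DERIV_ident]])
    have d3: "((\<lambda>v. ln (1 - v*t)) has_real_derivative (1 / (1 - v*t) * (0 - 1*t))) (at v)"
      by (rule DERIV_chain2[OF DERIV_ln_divide[OF pos] d2])
    have "((\<lambda>v. v * ln (1 - t) - ln (1 - v*t)) has_real_derivative (1 * ln (1-t) - 1 / (1 - v*t) * (0 - 1*t))) (at v)"
      by (rule DERIV_diff[OF d1 d3])
    moreover have "1 * ln (1-t) - 1 / (1 - v*t) * (0 - 1*t) = ln (1-t) - (- t)/(1 - v*t)" by simp
    ultimately have "((\<lambda>v. v * ln (1 - t) - ln (1 - v*t)) has_real_derivative (ln (1-t) - (- t)/(1 - v*t))) (at v)"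
      by simp
    moreover have "ln (1-t) - (- t)/(1 - v*t) \<ge> 0"
    proof -
      have "ln (1/(1-t)) \<le> 1/(1-t) - 1" using assms by (intro ln_le_minus_one) simp
      hence "ln (1-t) \<ge> -(t/(1-t))" using assms by (simp add: ln_div field_simps)
      moreover have "t/(1-t) \<le> t/(1 - v*t)"
      proof (rule divide_left_mono)
        show "1 - v*t \<le> 1 - t" using v assms mult_right_mono[of 1 v t] by simp
        show "0 \<le> t" using assms by simp
        show "0 < (1 - t) * (1 - v*t)" using pos assms by simp
      qed
      ultimately show ?thesis by simp
    qed
    ultimately show "\<exists>y. ((\<lambda>v. v * ln (1 - t) - ln (1 - v*t)) has_real_derivative y) (at v) \<and> y \<ge> 0"
      by blast
  qed
  thus ?thesis by simp
qed

lemma iden: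
  fixes t w :: real
  assumes "w = 1 - t^2" "w \<noteq> 0"
  shows "1 + (3*t^2 * (3*w) - t^3 * (-(6*t))) / ((3*w) * (3*w)) - 1/w = 2*t^4 / (3*(w*w))"
proof -
  have "1 + (3*t^2 * (3*w) - t^3 * (-(6*t))) / ((3*w) * (3*w)) - 1/w
      = (9*w*w + 9*t^2*w + 6*t^4 - 9*w) / (9*(w*w))"
    using assms(2) by (simp add: field_simps power2_eq_square power3_eq_cube power4_eq_xxxx)
  also have "9*w*w + 9*t^2*w + 6*t^4 - 9*w = 6*t^4"
  proof -
    have "9*w*w + 9*t^2*w - 9*w = 9*w*(w + t^2 - 1)" by (simp add: algebra_simps)
    also have "\<dots> = 0" using assms(1) by simp
    finally show ?thesis by simp
  qed
  finally show ?thesis by simp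
qed
lemma cube_deriv: "((\<lambda>t. t^3) has_real_derivative (3*t^2)) (at (t::real))"
  using DERIV_pow[of 3 t] by simp
lemma den_deriv: "((\<lambda>t. 3*(1-t^2)) has_real_derivative (-(6*t))) (at (t::real))"
  using DERIV_cmult[OF DERIV_diff[OF DERIV_const[of 1] DERIV_pow[of 2]], of 3] by simp

lemma artanh_upper:
  fixes x :: real
  assumes "0 \<le> x" "x < 1"
  shows "artanh x \<le> x + x^3 / (3*(1-x^2))"
proof -
  have "(\<lambda>t. t + t^3 / (3*(1-t^2)) - artanh t) 0 \<le> (\<lambda>t. t + t^3 / (3*(1-t^2)) - artanh t) x"
  proof (rule DERIV_nonneg_imp_nondecreasing[OF assms(1)])
    fix t assume t: "0 \<le> t" "t \<le> x"
    have a: "\<bar>t\<bar> < 1" using t assms by auto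
    hence t2: "t^2 < 1" by (simp add: power2_less_1_iff abs_less_iff)
    note h1 = cube_deriv[of t]
    note h2 = den_deriv[of t]
    have hd: "((\<lambda>t. t + t^3 / (3*(1-t^2)) - artanh t) has_real_derivative
        (1 + (3*t^2 * (3*(1-t^2)) - t^3 * (-(6*t))) / ((3*(1-t^2)) * (3*(1-t^2))) - 1/(1-t^2))) (at t)"
    proof -
      have nz: "3*(1-t^2) \<noteq> 0" using t2 by simp
      show ?thesis
        by (rule DERIV_diff[OF DERIV_add[OF DERIV_ident DERIV_divide[OF h1 h2 nz]] artanh_real_has_field_derivative[OF a]])
    qed
    have eq: "1 + (3*t^2 * (3*(1-t^2)) - t^3 * (-(6*t))) / ((3*(1-t^2)) * (3*(1-t^2))) - 1/(1-t^2)
          = 2*t^4 / (3*((1-t^2)*(1-t^2)))"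
      by (rule iden) (use t2 in simp_all)
    moreover have "2*t^4 / (3*((1-t^2)*(1-t^2))) \<ge> 0" by simp
    ultimately show "\<exists>y. ((\<lambda>t. t + t^3 / (3*(1-t^2)) - artanh t) has_real_derivative y) (at t) \<and> y \<ge> 0"
      using hd[unfolded eq] by blast
  qed
  thus ?thesis by simp
qed

theorem lemma2p2:
  fixes u s :: real
  assumes "0 \<le> u" and "u \<le> 1" and "s \<ge> 1"
  shows "(\<forall>x. 0 < x \<and> x < 1 \<longrightarrow> g u s x > 0) \<longleftrightarrow> 3 * s * u \<le> 2"
proof
  assume H: "\<forall>x. 0 < x \<and> x < 1 \<longrightarrow> g u s x > 0"
  show "3 * s * u \<le> 2"
  proof (rule ccontr)
    assume "\<not> 3 * s * u \<le> 2"
    hence su: "s * u > 2/3" by simp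
    define c where "c = 2 / (3 * s * u)"
    have c: "0 < c" "c < 1" using su assms unfolding c_def by (auto simp: field_simps)
    define x where "x = sqrt ((1 - c)/2)"
    have x2: "x^2 = (1-c)/2" unfolding x_def using c by simp
    have x0: "x > 0" unfolding x_def using c by simp
    have xx: "x^2 < 1" using x2 c by simp
    have x1: "x < 1" using xx x0 by (simp add: power2_less_1_iff abs_less_iff)
    have gpos: "g u s x > 0" using H x0 x1 by simp
    have q: "1 - u*x^2 > 0" using assms xx
      by (smt (verit) mult_left_le_one_le zero_le_power2)
    have l1: "ln (1 - u*x^2) \<le> - (u*x^2)" using ln_le_minus_one[OF q] by simp
    have apos: "artanh x > 0"
    proof -
      have "x / sqrt (1 - 2*x^2/3) > 0" using x0 xx by simp
      thus ?thesis using key_ineq[OF x0 x1] by linarith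
    qed
    have l2: "ln (artanh x / x) \<le> artanh x / x - 1"
      using apos x0 by (intro ln_le_minus_one) simp
    have "artanh x / x \<le> (x + x^3 / (3*(1-x^2))) / x"
      using artanh_upper[of x] x0 x1 by (simp add: divide_right_mono)
    also have "\<dots> = 1 + x^2/(3*(1-x^2))" using x0 xx
      by (simp add: field_simps power2_eq_square power3_eq_cube)
    finally have l3: "artanh x / x - 1 \<le> x^2/(3*(1-x^2))" by simp
    have "g u s x \<le> s/2 * (-(u*x^2)) + x^2/(3*(1-x^2))"
      unfolding g_def using l1 l2 l3 assms
      by (smt (verit) mult_left_mono divide_nonneg_pos)
    also have "\<dots> = x^2 * (1/(3*(1-x^2)) - s*u/2)" by (simp add: field_simps)
    also have "\<dots> < 0"
    proof -
      have "1 - x^2 > c" using x2 c by simp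
      hence "1/(3*(1-x^2)) < 1/(3*c)" using c by (simp add: frac_less2)
      also have "1/(3*c) = s*u/2" unfolding c_def using su by (simp add: field_simps)
      finally show ?thesis using x0 by (simp add: mult_pos_neg)
    qed
    finally show False using gpos by simp
  qed
next
  assume su: "3 * s * u \<le> 2"
  show "\<forall>x. 0 < x \<and> x < 1 \<longrightarrow> g u s x > 0"
  proof (intro allI impI)
    fix x :: real assume "0 < x \<and> x < 1"
    hence x0: "0 < x" and x1: "x < 1" by auto
    have xx: "x^2 < 1" using x0 x1 by (simp add: power2_less_1_iff abs_less_iff)
    have x2pos: "x^2 > 0" using x0 by simp
    define t where "t = u * x^2"
    have t0: "0 \<le> t" unfolding t_def using assms by simp
    have t1: "t < 1" unfolding t_def using assms xx
      by (smt (verit) mult_left_le_one_le zero_le_power2)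
    have st: "s * t \<le> 2 * x^2 / 3" unfolding t_def
    proof -
      have "s * (u * x^2) = (s*u) * x^2" by simp
      also have "\<dots> \<le> (2/3) * x^2" using su x2pos by (intro mult_right_mono) auto
      finally show "s * (u * x^2) \<le> 2 * x^2 / 3" by simp
    qed
    define q where "q = 1 - 2*x^2/3"
    have q: "q > 0" unfolding q_def using xx by simp
    have "ln q \<le> ln (1 - s*t)" using q st unfolding q_def by simp
    also have "\<dots> \<le> s * ln (1 - t)" using bern_ln[OF t0 t1 assms(3)] st xx by simp
    finally have A: "ln q \<le> s * ln (1 - t)" .
    have "artanh x / x > 1 / sqrt q"
      using key_ineq[OF x0 x1] x0 unfolding q_def by (simp add: field_simps)
    moreover have "1 / sqrt q > 0" using q by simp
    ultimately have "ln (artanh x / x) > ln (1 / sqrt q)"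
      by (metis ln_less_cancel_iff order.strict_trans)
    also have "ln (1 / sqrt q) = - (ln q / 2)" using q by (simp add: ln_div ln_sqrt)
    finally have B: "ln (artanh x / x) > - (ln q / 2)" .
    show "g u s x > 0" unfolding g_def t_def[symmetric] using A B by simp
  qed
qed

end
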